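(* Let $A, B, C \subseteq\omega$ with $B$ and $C$ infinite. If $A$ is c.e. relative to every infinite subset of $B$, and $B$ is c.e. relative to every infinite subset of $C$, then $A$ is c.e. relative to every infinite subset of $C$. *)

theory Defs
  imports Main
begin

text \<open>Arguments are lists of naturals; out-of-range arguments default to 0.\<close>

datatype recf =
    Zero
  | Succ
  | Proj nat
  | Orc
  | Comp recf "recf list"
  | Prec recf recf
  | Mn recf

definition arg :: "nat list \<Rightarrow> nat \<Rightarrow> nat" where
  "arg xs i = (if i < length xs then xs ! i else 0)"

inductive eval :: "nat set \<Rightarrow> recf \<Rightarrow> nat list \<Rightarrow> nat \<Rightarrow> bool" for X where
  zero: "eval X Zero xs 0"
| succ: "eval X Succ xs (Suc (arg xs 0))"
| proj: "eval X (Proj i) xs (arg xs i)"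
| orc: "eval X Orc xs (if arg xs 0 \<in> X then 1 else 0)"
| comp: "\<lbrakk>length ys = length gs; \<forall>i<length gs. eval X (gs ! i) xs (ys ! i);
          eval X f ys v\<rbrakk> \<Longrightarrow> eval X (Comp f gs) xs v"
| prec0: "eval X f xs v \<Longrightarrow> eval X (Prec f g) (0 # xs) v"
| precS: "\<lbrakk>eval X (Prec f g) (n # xs) r; eval X g (n # r # xs) v\<rbrakk>
          \<Longrightarrow> eval X (Prec f g) (Suc n # xs) v"
| mn: "\<lbrakk>eval X f (n # xs) 0; \<forall>m<n. \<exists>v. v > 0 \<and> eval X f (m # xs) v\<rbrakk>
          \<Longrightarrow> eval X (Mn f) xs n"

definition ce_in :: "nat set \<Rightarrow> nat set \<Rightarrow> bool" where
  "ce_in A X \<longleftrightarrow> (\<exists>f. \<forall>x. x \<in> A \<longleftrightarrow> (\<exists>v. eval X f [x] v))"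

end

theory Submission
  imports Defs
begin

inductive_cases compE: "eval X (Comp f gs) xs v"
inductive_cases precE: "eval X (Prec f g) xs v"
inductive_cases mnE: "eval X (Mn f) xs v"
inductive_cases zeroE: "eval X Zero xs v"
inductive_cases succE: "eval X Succ xs v"
inductive_cases projE: "eval X (Proj i) xs v"
inductive_cases orcE: "eval X Orc xs v"

lemma eval_det: "eval X f xs v \<Longrightarrow> eval X f xs w \<Longrightarrow> v = w"
proof (induction arbitrary: w rule: eval.induct)
  case (comp ys gs xs f v)
  from comp.prems obtain ys' where l: "length ys' = length gs"
    and a: "\<forall>i<length gs. eval X (gs ! i) xs (ys' ! i)" and b: "eval X f ys' w"
    by (rule compE) auto
  have "ys = ys'"
  proof (rule nth_equalityI)
    show "length ys = length ys'" using comp.hyps(1) l by simp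
    fix i assume "i < length ys"
    then show "ys ! i = ys' ! i" using comp.hyps(1) comp.IH(1) a by auto
  qed
  then show ?case using comp.IH b by blast
next
  case (prec0 f xs v g)
  from prec0.prems show ?case by (rule precE) (use prec0.IH in auto)
next
  case (precS f g n xs r v)
  from precS.prems obtain r' where "eval X (Prec f g) (n # xs) r'" "eval X g (n # r' # xs) w"
    by (rule precE) auto
  then show ?case using precS.IH by blast
next
  case (mn f n xs)
  from mn.prems have a: "eval X f (w # xs) 0" and b: "\<forall>m<w. \<exists>v>0. eval X f (m # xs) v"
    by (auto elim: mnE)
  show ?case
  proof (rule ccontr)
    assume "n \<noteq> w"
    then consider "n < w" | "w < n" by linarith
    then show False
    proof cases
      case 1 then obtain v where "v > 0" "eval X f (n # xs) v" using b by blast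
      then show False using mn.IH(1) by fastforce
    next
      case 2 then obtain v where "v > 0" "\<forall>u. eval X f (w # xs) u \<longrightarrow> v = u" using mn.IH(2) by blast
      then show False using a by fastforce
    qed
  qed
next
  case (zero xs) then show ?case by (rule zeroE) simp
next
  case (succ xs) then show ?case by (rule succE) simp
next
  case (proj i xs) then show ?case by (rule projE) simp
next
  case (orc xs) then show ?case by (rule orcE) simp
qed


lemma eval_eq: "eval X f xs v \<Longrightarrow> v = w \<Longrightarrow> eval X f xs w" by simp

lemma ev_comp: "list_all2 (\<lambda>g y. eval X g xs y) gs ys \<Longrightarrow> eval X f ys v \<Longrightarrow> eval X (Comp f gs) xs v"
  by (rule eval.comp) (auto simp: list_all2_conv_all_nth)

lemma ev_comp1: "eval X g xs y \<Longrightarrow> eval X f [y] v \<Longrightarrow> eval X (Comp f [g]) xs v"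
  by (rule ev_comp[where ys="[y]"]) auto

lemma ev_proj: "i < length xs \<Longrightarrow> eval X (Proj i) xs (xs ! i)"
  using eval.proj[of X i xs] by (simp add: arg_def)

definition Pred :: recf where "Pred = Prec Zero (Proj 0)"

lemma ev_Pred: "eval X Pred [a] (a - 1)"
proof (induction a)
  case 0 show ?case unfolding Pred_def using eval.prec0[OF eval.zero[of X "[]"], where g="Proj 0"] by simp
next
  case (Suc a)
  show ?case unfolding Pred_def
    by (rule eval.precS[OF Suc[unfolded Pred_def]]) (use eval.proj[of X 0 "[a, a-1]"] in \<open>simp add: arg_def\<close>)
qed

lemma ev_pred: "eval X g xs a \<Longrightarrow> eval X (Comp Pred [g]) xs (a - 1)"
  by (rule ev_comp1[OF _ ev_Pred])

definition IfZ :: recf where "IfZ = Prec (Proj 0) (Proj 3)"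

lemma ev_IfZ: "eval X IfZ [a, b, c] (if a = 0 then b else c)"
proof (cases a)
  case 0 then show ?thesis unfolding IfZ_def
    using eval.prec0[OF eval.proj[of X 0 "[b,c]"], of "Proj 3"] by (simp add: arg_def)
next
  case (Suc n)
  have "\<exists>r. eval X IfZ [m, b, c] r" for m
  proof (induction m)
    case 0 then show ?case unfolding IfZ_def using eval.prec0[OF eval.proj[of X 0 "[b,c]"], of "Proj 3"] by blast
  next
    case (Suc m) then obtain r where "eval X IfZ [m, b, c] r" by blast
    then show ?case unfolding IfZ_def using eval.precS[OF _ eval.proj[of X 3 "[m, r, b, c]"]] by blast
  qed
  then obtain r where "eval X IfZ [n, b, c] r" by blast
  then show ?thesis unfolding IfZ_def using Suc eval.precS[OF _ eval.proj[of X 3 "[n, r, b, c]"]]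
    by (simp add: arg_def)
qed

definition ifz :: "recf \<Rightarrow> recf \<Rightarrow> recf \<Rightarrow> recf" where "ifz a b c = Comp IfZ [a, b, c]"

lemma ev_ifz: "eval X a xs x \<Longrightarrow> eval X b xs y \<Longrightarrow> eval X c xs z \<Longrightarrow> eval X (ifz a b c) xs (if x = 0 then y else z)"
  unfolding ifz_def by (rule ev_comp[where ys="[x,y,z]"]) (simp_all add: ev_IfZ)

lemma arg_Cons0[simp]: "arg (x # xs) 0 = x" and arg_ConsS[simp]: "arg (x # xs) (Suc i) = arg xs i"
  by (auto simp: arg_def)

lemma arg_Cons1[simp]: "arg (x # xs) 1 = arg xs 0" and arg_ConsN[simp]: "arg (x # xs) (numeral n) = arg xs (pred_numeral n)"
  by (auto simp: arg_def numeral_eq_Suc)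

lemma ev_projs':
  assumes "length pre = d" "length ys = j"
  shows "list_all2 (\<lambda>g y. eval X g (pre @ ys) y) (map (\<lambda>i. Proj (i + d)) [0..<j]) ys"
proof -
  have "eval X (Proj (i + length pre)) (pre @ ys) (ys ! i)" if "i < length ys" for i
    using eval.proj[of X "i + length pre" "pre @ ys"] that by (simp add: arg_def nth_append)
  then show ?thesis using assms by (auto simp: list_all2_conv_all_nth)
qed

lemma ev_projs: "list_all2 (\<lambda>g y. eval X g (pre @ ys) y) (map (\<lambda>i. Proj (i + length pre)) [0..<length ys]) ys"
proof -
  have "eval X (Proj (i + length pre)) (pre @ ys) (ys ! i)" if "i < length ys" for i
    using eval.proj[of X "i + length pre" "pre @ ys"] that by (simp add: arg_def nth_append)
  then show ?thesis by (auto simp: list_all2_conv_all_nth)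
qed

fun condall :: "recf list \<Rightarrow> recf \<Rightarrow> recf" where
  "condall [] e = e"
| "condall (h # hs) e = ifz h Zero (condall hs e)"

lemma ev_condall: "list_all2 (\<lambda>h y. eval X h zs y) hs ys \<Longrightarrow> eval X e zs w \<Longrightarrow>
   eval X (condall hs e) zs (if list_all (\<lambda>y. y \<noteq> 0) ys then w else 0)"
proof (induction hs arbitrary: ys)
  case Nil then show ?case by simp
next
  case (Cons h hs)
  then obtain y ys' where ys: "ys = y # ys'" "eval X h zs y" "list_all2 (\<lambda>h y. eval X h zs y) hs ys'"
    by (cases ys) auto
  have "eval X (condall (h # hs) e) zs (if y = 0 then 0 else (if list_all (\<lambda>y. y \<noteq> 0) ys' then w else 0))"
    using ev_ifz[OF ys(2) eval.zero Cons.IH[OF ys(3) Cons.prems(2)]] by simp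
  then show ?case using ys(1) by (simp split: if_splits)
qed

fun precl :: "nat \<Rightarrow> nat \<Rightarrow> (nat \<Rightarrow> nat \<Rightarrow> nat) \<Rightarrow> nat" where
  "precl 0 a G = a"
| "precl (Suc n) a G = (let r = precl n a G in if r = 0 then 0 else G n (r - 1))"

fun mloop :: "(nat \<Rightarrow> nat) \<Rightarrow> nat \<Rightarrow> nat" where
  "mloop t 0 = 1"
| "mloop t (Suc c) = (let S = mloop t c in if S = 0 then 0 else if S = 1 then
     (if t c = 0 then 0 else if t c = 1 then Suc (Suc c) else 1) else S)"

fun sem :: "nat set \<Rightarrow> nat \<Rightarrow> nat \<Rightarrow> recf \<Rightarrow> nat list \<Rightarrow> nat" where
  "sem X s k Zero xs = 1"
| "sem X s k Succ xs = Suc (Suc (arg xs 0))"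
| "sem X s k (Proj i) xs = Suc (arg xs i)"
| "sem X s k Orc xs = Suc (if arg xs 0 \<in> X then 1 else 0)"
| "sem X s k (Comp f gs) xs = (if list_all (\<lambda>g. sem X s k g xs \<noteq> 0) gs
      then sem X s (length gs) f (map (\<lambda>g. sem X s k g xs - 1) gs) else 0)"
| "sem X s k (Prec f g) xs = (case k of 0 \<Rightarrow> 0 | Suc j \<Rightarrow>
      precl (hd xs) (sem X s j f (tl xs)) (\<lambda>n r. sem X s (Suc (Suc j)) g (n # r # tl xs)))"
| "sem X s k (Mn f) xs = mloop (\<lambda>c. sem X s (Suc k) f (c # xs)) s - 1"

fun T :: "nat \<Rightarrow> recf \<Rightarrow> recf" where
  "T k Zero = Comp Succ [Zero]"
| "T k Succ = Comp Succ [Comp Succ [Proj 1]]"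
| "T k (Proj i) = Comp Succ [Proj (Suc i)]"
| "T k Orc = Comp Succ [Comp Orc [Proj 1]]"
| "T k (Comp f gs) = condall (map (T k) gs)
     (Comp (T (length gs) f) (Proj 0 # map (\<lambda>g. Comp Pred [T k g]) gs))"
| "T k (Prec f g) = (case k of 0 \<Rightarrow> Zero | Suc j \<Rightarrow>
     Comp (Prec (T j f) (ifz (Proj 1) Zero
        (Comp (T (Suc (Suc j)) g) (Proj 2 # Proj 0 # Comp Pred [Proj 1] # map (\<lambda>i. Proj (i + 3)) [0..<j]))))
      (Proj 1 # Proj 0 # map (\<lambda>i. Proj (i + 2)) [0..<j]))"
| "T k (Mn f) = (let TT = Comp (T (Suc k) f) (Proj 2 # Proj 0 # map (\<lambda>i. Proj (i + 3)) [0..<k]) in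
     Comp Pred [Comp (Prec (Comp Succ [Zero])
       (ifz (Proj 1) Zero (ifz (Comp Pred [Proj 1])
           (ifz TT Zero (ifz (Comp Pred [TT]) (Comp Succ [Comp Succ [Proj 0]]) (Comp Succ [Zero])))
           (Proj 1))))
       (Proj 0 # Proj 0 # map (\<lambda>i. Proj (i + 1)) [0..<k])])"


lemma T_correct: "length xs = k \<Longrightarrow> eval X (T k f) (s # xs) (sem X s k f xs)"
proof (induction f arbitrary: k xs s)
  case Zero
  then show ?case using ev_comp1[OF eval.zero eval.succ] by simp
next
  case Succ
  then show ?case using ev_comp1[OF ev_comp1[OF eval.proj[of X 1 "s # xs"] eval.succ] eval.succ] by simp
next
  case (Proj i)
  then show ?case using ev_comp1[OF eval.proj[of X "Suc i" "s # xs"] eval.succ] by simp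
next
  case Orc
  then show ?case using ev_comp1[OF ev_comp1[OF eval.proj[of X 1 "s # xs"] eval.orc] eval.succ] by simp
next
  case (Comp f gs)
  let ?ys = "map (\<lambda>g. sem X s k g xs) gs"
  have h1: "list_all2 (\<lambda>h y. eval X h (s # xs) y) (map (T k) gs) ?ys"
    using Comp by (auto simp: list_all2_conv_all_nth)
  have h2: "list_all2 (\<lambda>h y. eval X h (s # xs) y) (Proj 0 # map (\<lambda>g. Comp Pred [T k g]) gs)
      (s # map (\<lambda>g. sem X s k g xs - 1) gs)"
  proof -
    have "list_all2 (\<lambda>h y. eval X h (s # xs) y) (map (\<lambda>g. Comp Pred [T k g]) gs)
      (map (\<lambda>g. sem X s k g xs - 1) gs)"
      using ev_pred[OF Comp.IH(2)[OF nth_mem Comp.prems]] by (auto simp: list_all2_conv_all_nth)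
    then show ?thesis using eval.proj[of X 0 "s # xs"] by simp
  qed
  have h3: "eval X (T (length gs) f) (s # map (\<lambda>g. sem X s k g xs - 1) gs)
      (sem X s (length gs) f (map (\<lambda>g. sem X s k g xs - 1) gs))"
    using Comp by simp
  show ?case using ev_condall[OF h1 ev_comp[OF h2 h3]] by (simp add: list.pred_map o_def)
next
  case (Prec f g)
  show ?case
  proof (cases k)
    case 0 then show ?thesis by (simp add: eval.zero)
  next
    case (Suc j)
    with Prec.prems obtain n ys where xs: "xs = n # ys" and lys: "length ys = j" by (cases xs) auto
    define G where "G = ifz (Proj 1) Zero
        (Comp (T (Suc (Suc j)) g) (Proj 2 # Proj 0 # Comp Pred [Proj 1] # map (\<lambda>i. Proj (i + 3)) [0..<j]))"
    have loop: "eval X (Prec (T j f) G) (m # s # ys)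
       (precl m (sem X s j f ys) (\<lambda>n r. sem X s (Suc (Suc j)) g (n # r # ys)))" for m
    proof (induction m)
      case 0 then show ?case using Prec.IH(1)[OF lys] by (simp add: eval.prec0)
    next
      case (Suc m)
      define R where "R = precl m (sem X s j f ys) (\<lambda>n r. sem X s (Suc (Suc j)) g (n # r # ys))"
      have a: "list_all2 (\<lambda>h y. eval X h (m # R # s # ys) y)
          (Proj 2 # Proj 0 # Comp Pred [Proj 1] # map (\<lambda>i. Proj (i + 3)) [0..<j]) (s # m # (R - 1) # ys)"
        using ev_projs'[of "[m, R, s]" 3 ys j X] lys eval.proj[of X 2 "m # R # s # ys"]
          eval.proj[of X 0 "m # R # s # ys"] ev_pred[OF eval.proj[of X 1 "m # R # s # ys"]]
        by (simp add: numeral_eq_Suc)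
      have b: "eval X (T (Suc (Suc j)) g) (s # m # (R - 1) # ys) (sem X s (Suc (Suc j)) g (m # (R - 1) # ys))"
        using Prec.IH(2) lys by simp
      have "eval X G (m # R # s # ys) (if R = 0 then 0 else sem X s (Suc (Suc j)) g (m # (R - 1) # ys))"
        unfolding G_def using ev_ifz[OF eval.proj[of X 1 "m # R # s # ys"] eval.zero ev_comp[OF a b]] by simp
      then show ?case using eval.precS[OF Suc[folded R_def]] by (simp add: R_def[symmetric] Let_def)
    qed
    have a: "list_all2 (\<lambda>h y. eval X h (s # n # ys) y)
        (Proj 1 # Proj 0 # map (\<lambda>i. Proj (i + 2)) [0..<j]) (n # s # ys)"
      using ev_projs'[of "[s, n]" 2 ys j X] lys eval.proj[of X 1 "s # n # ys"] eval.proj[of X 0 "s # n # ys"]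
      by (simp add: numeral_eq_Suc)
    show ?thesis using ev_comp[OF a loop[of n]] by (simp add: Suc xs G_def)
  qed
next
  case (Mn f)
  define tf where "tf = (\<lambda>c. sem X s (Suc k) f (c # xs))"
  define TT where "TT = Comp (T (Suc k) f) (Proj 2 # Proj 0 # map (\<lambda>i. Proj (i + 3)) [0..<k])"
  define Gm where "Gm = ifz (Proj 1) Zero (ifz (Comp Pred [Proj 1])
           (ifz TT Zero (ifz (Comp Pred [TT]) (Comp Succ [Comp Succ [Proj 0]]) (Comp Succ [Zero])))
           (Proj 1))"
  have eTT: "eval X TT (c # S # s # xs) (tf c)" for c S
  proof -
    have a: "list_all2 (\<lambda>h y. eval X h (c # S # s # xs) y)
          (Proj 2 # Proj 0 # map (\<lambda>i. Proj (i + 3)) [0..<k]) (s # c # xs)"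
        using ev_projs'[of "[c, S, s]" 3 xs k X] Mn.prems eval.proj[of X 2 "c # S # s # xs"]
          eval.proj[of X 0 "c # S # s # xs"]
        by (simp add: numeral_eq_Suc)
    show ?thesis unfolding TT_def tf_def using ev_comp[OF a Mn.IH] Mn.prems by simp
  qed
  have loop: "eval X (Prec (Comp Succ [Zero]) Gm) (c # s # xs) (mloop tf c)" for c
  proof (induction c)
    case 0 then show ?case using eval.prec0[OF ev_comp1[OF eval.zero eval.succ]] by simp
  next
    case (Suc c)
    define S where "S = mloop tf c"
    have "eval X Gm (c # S # s # xs) (mloop tf (Suc c))"
      unfolding Gm_def
      apply (rule eval_eq[OF ev_ifz[OF eval.proj[of X 1 "c # S # s # xs"] eval.zero ev_ifz[OF ev_pred[OF eval.proj[of X 1 "c # S # s # xs"]]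
          ev_ifz[OF eTT eval.zero ev_ifz[OF ev_pred[OF eTT] ev_comp1[OF ev_comp1[OF eval.proj[of X 0 "c # S # s # xs"] eval.succ] eval.succ]
             ev_comp1[OF eval.zero eval.succ]]] eval.proj[of X 1 "c # S # s # xs"]]]])
      apply (simp add: S_def[symmetric] Let_def)
      done
    then show ?case using eval.precS[OF Suc[folded S_def]] by simp
  qed
  have a: "list_all2 (\<lambda>h y. eval X h (s # xs) y)
        (Proj 0 # Proj 0 # map (\<lambda>i. Proj (i + 1)) [0..<k]) (s # s # xs)"
    using ev_projs'[of "[s]" 1 xs k X] Mn.prems eval.proj[of X 0 "s # xs"] by simp
  show ?case using ev_pred[OF ev_comp[OF a loop[of s]]] unfolding Gm_def
    by (simp add: Let_def TT_def[symmetric] tf_def)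
qed


lemma mloop_props:
  "(mloop t c = 1 \<longrightarrow> (\<forall>i<c. t i \<ge> 2)) \<and>
   (\<forall>m. mloop t c = Suc (Suc m) \<longrightarrow> m < c \<and> t m = 1 \<and> (\<forall>i<m. t i \<ge> 2))"
proof (induction c)
  case 0 then show ?case by simp
next
  case (Suc c)
  show ?case
  proof (cases "mloop t c = 0")
    case True then show ?thesis by (simp add: Let_def)
  next
    case False
    show ?thesis
    proof (cases "mloop t c = 1")
      case True
      then show ?thesis using Suc by (auto simp: Let_def less_Suc_eq)
    next
      case False2: False
      then obtain m where "mloop t c = Suc (Suc m)" using False
        by (metis One_nat_def not0_implies_Suc)
      then show ?thesis using Suc by (auto simp: Let_def)
    qed
  qed
qed

lemma mloop_reach:
  assumes "t n = 1" "\<forall>i<n. t i \<ge> 2" "n < c"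
  shows "mloop t c = Suc (Suc n)"
proof -
  have a: "c \<le> n \<Longrightarrow> mloop t c = 1" for c
  proof (induction c)
    case 0 then show ?case by simp
  next
    case (Suc c) then have "t c \<ge> 2" using assms(2) by auto
    then show ?case using Suc by (simp add: Let_def)
  qed
  have b: "mloop t (Suc n + d) = Suc (Suc n)" for d
  proof (induction d)
    case 0 then show ?case using a[of n] assms(1) by (simp add: Let_def)
  next
    case (Suc d) then show ?case by (simp add: Let_def)
  qed
  from assms(3) obtain d where "c = Suc n + d" by (metis less_imp_Suc_add add_Suc)
  then show ?thesis using b by simp
qed

lemma sem_sound: "sem X s k f xs = Suc v \<Longrightarrow> length xs = k \<Longrightarrow> eval X f xs v"
proof (induction f arbitrary: k xs v)
  case Zero then show ?case using eval.zero by simp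
next
  case Succ then show ?case using eval.succ[of X xs] by simp
next
  case (Proj i) then show ?case using eval.proj[of X i xs] by simp
next
  case Orc then show ?case using eval.orc[of X xs] by simp
next
  case (Comp f gs)
  let ?ys = "map (\<lambda>g. sem X s k g xs - 1) gs"
  from Comp.prems have all: "list_all (\<lambda>g. sem X s k g xs \<noteq> 0) gs"
    and fv: "sem X s (length gs) f ?ys = Suc v" by (auto split: if_splits)
  have "eval X (gs ! i) xs (?ys ! i)" if "i < length gs" for i
  proof -
    have "sem X s k (gs ! i) xs \<noteq> 0" using all that by (simp add: list_all_length)
    then have "sem X s k (gs ! i) xs = Suc (?ys ! i)" using that by simp
    then show ?thesis using Comp.IH(2)[OF nth_mem[OF that]] Comp.prems(2) by blast
  qed
  moreover have "eval X f ?ys v" using Comp.IH(1)[OF fv] by simp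
  ultimately show ?case by (intro eval.comp) auto
next
  case (Prec f g)
  show ?case
  proof (cases k)
    case 0 then show ?thesis using Prec.prems by simp
  next
    case (Suc j)
    with Prec.prems obtain n ys where xs: "xs = n # ys" and lys: "length ys = j" by (cases xs) auto
    have "\<And>v. precl m (sem X s j f ys) (\<lambda>n r. sem X s (Suc (Suc j)) g (n # r # ys)) = Suc v
        \<Longrightarrow> eval X (Prec f g) (m # ys) v" for m
    proof (induction m)
      case 0 then show ?case using Prec.IH(1) lys by (auto intro: eval.prec0)
    next
      case (Suc m v)
      define R where "R = precl m (sem X s j f ys) (\<lambda>n r. sem X s (Suc (Suc j)) g (n # r # ys))"
      from Suc.prems have "R \<noteq> 0" by (simp add: R_def[symmetric] Let_def split: if_splits)
      then obtain r where R: "R = Suc r" by (cases R) auto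
      from Suc.prems have gv: "sem X s (Suc (Suc j)) g (m # r # ys) = Suc v"
        by (simp add: R_def[symmetric] Let_def R)
      show ?case using eval.precS[OF Suc.IH[OF R[unfolded R_def]] Prec.IH(2)[OF gv]] lys by simp
    qed
    then show ?thesis using Prec.prems(1) by (simp add: Suc xs)
  qed
next
  case (Mn f)
  define t where "t = (\<lambda>c. sem X s (Suc k) f (c # xs))"
  from Mn.prems have "mloop t s = Suc (Suc v)" by (simp add: t_def)
  then have p: "v < s" "t v = 1" "\<forall>i<v. t i \<ge> 2" using mloop_props[of t s] by auto
  have "eval X f (v # xs) 0" using Mn.IH[of "Suc k" "v # xs" 0] p(2) Mn.prems(2) by (simp add: t_def)
  moreover have "\<exists>w>0. eval X f (i # xs) w" if "i < v" for i
  proof -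
    have "t i = Suc (t i - 1)" "t i - 1 > 0" using p(3) that by auto
    then have "eval X f (i # xs) (t i - 1)" using Mn.IH[of "Suc k" "i # xs" "t i - 1"] Mn.prems(2) by (auto simp: t_def)
    then show ?thesis using \<open>t i - 1 > 0\<close> by blast
  qed
  ultimately show ?case by (intro eval.mn) auto
qed

lemma finite_thresh: "(\<forall>i<(n::nat). \<exists>s0::nat. \<forall>s\<ge>s0. P i s) \<Longrightarrow> \<exists>s0. \<forall>i<n. \<forall>s\<ge>s0. P i s"
proof (induction n)
  case 0 then show ?case by simp
next
  case (Suc n)
  then obtain a where a: "\<forall>i<n. \<forall>s\<ge>a. P i s" by auto
  from Suc.prems obtain b where b: "\<forall>s\<ge>b. P n s" by auto
  have "\<forall>i<Suc n. \<forall>s\<ge>max a b. P i s"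
  proof (intro allI impI)
    fix i s assume "i < Suc n" "max a b \<le> s"
    then show "P i s" using a b by (cases "i = n") (auto simp: max.bounded_iff)
  qed
  then show ?case by blast
qed


lemma sem_complete: "eval X f xs v \<Longrightarrow> length xs = k \<Longrightarrow> \<exists>s0. \<forall>s\<ge>s0. sem X s k f xs = Suc v"
proof (induction arbitrary: k rule: eval.induct)
  case (comp ys gs xs f v)
  have "\<forall>i<length gs. \<exists>s0. \<forall>s\<ge>s0. sem X s k (gs ! i) xs = Suc (ys ! i)"
  proof (intro allI impI)
    fix i assume i: "i < length gs"
    from comp.IH(1) i have "\<forall>x. length xs = x \<longrightarrow> (\<exists>s0. \<forall>s\<ge>s0. sem X s x (gs ! i) xs = Suc (ys ! i))"
      by blast
    then show "\<exists>s0. \<forall>s\<ge>s0. sem X s k (gs ! i) xs = Suc (ys ! i)" using comp.prems by simp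
  qed
  from finite_thresh[OF this] obtain a where a: "\<forall>i<length gs. \<forall>s\<ge>a. sem X s k (gs ! i) xs = Suc (ys ! i)"
    by blast
  from comp.IH(2)[OF comp.hyps(1)] obtain b where b: "\<forall>s\<ge>b. sem X s (length gs) f ys = Suc v"
    by blast
  show ?case
  proof (rule exI[of _ "max a b"], intro allI impI)
    fix s assume s: "max a b \<le> s"
    then have sa: "a \<le> s" and sb: "b \<le> s" by auto
    have ai: "sem X s k (gs ! i) xs = Suc (ys ! i)" if "i < length gs" for i
      using a that sa by blast
    have l: "list_all (\<lambda>g. sem X s k g xs \<noteq> 0) gs" using ai by (simp add: list_all_length)
    have m: "map (\<lambda>g. sem X s k g xs - 1) gs = ys"
      using ai comp.hyps(1) by (intro nth_equalityI) auto
    have "sem X s (length gs) f ys = Suc v" using b sb by blast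
    then show "sem X s k (Comp f gs) xs = Suc v" using l m by simp
  qed
next
  case (prec0 f xs v g)
  from prec0.IH[of "length xs"] obtain a where "\<forall>s\<ge>a. sem X s (length xs) f xs = Suc v" by blast
  then show ?case using prec0.prems by (intro exI[of _ a]) auto
next
  case (precS f g n xs r v)
  from precS.prems have k: "k = Suc (length xs)" by simp
  from precS.IH(1)[of k] k obtain a where a: "\<forall>s\<ge>a. sem X s k (Prec f g) (n # xs) = Suc r" by auto
  from precS.IH(2)[of "Suc (Suc (length xs))"] obtain b where
    b: "\<forall>s\<ge>b. sem X s (Suc (Suc (length xs))) g (n # r # xs) = Suc v" by auto
  show ?case
  proof (rule exI[of _ "max a b"], intro allI impI)
    fix s assume s: "max a b \<le> s"
    then have sa: "a \<le> s" and sb: "b \<le> s" by auto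
    have ka: "precl n (sem X s (length xs) f xs) (\<lambda>n r. sem X s (Suc (Suc (length xs))) g (n # r # xs)) = Suc r"
      using a sa k by simp
    have kb: "sem X s (Suc (Suc (length xs))) g (n # r # xs) = Suc v" using b sb by blast
    show "sem X s k (Prec f g) (Suc n # xs) = Suc v" using ka kb k by (simp add: Let_def)
  qed
next
  case (mn f n xs)
  from mn.IH(1)[of "Suc k"] mn.prems obtain a where a: "\<forall>s\<ge>a. sem X s (Suc k) f (n # xs) = Suc 0" by auto
  have "\<forall>m<n. \<exists>s0. \<forall>s\<ge>s0. sem X s (Suc k) f (m # xs) \<ge> 2"
  proof (intro allI impI)
    fix m assume "m < n"
    with mn.IH(2) obtain w where w: "w > 0"
      "\<forall>x. length (m # xs) = x \<longrightarrow> (\<exists>s0. \<forall>s\<ge>s0. sem X s x f (m # xs) = Suc w)" by blast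
    then obtain s0 where "\<forall>s\<ge>s0. sem X s (Suc k) f (m # xs) = Suc w" using mn.prems by auto
    then have "\<forall>s\<ge>s0. sem X s (Suc k) f (m # xs) \<ge> 2" using w(1) by auto
    then show "\<exists>s0. \<forall>s\<ge>s0. sem X s (Suc k) f (m # xs) \<ge> 2" by blast
  qed
  from finite_thresh[OF this] obtain b where b: "\<forall>m<n. \<forall>s\<ge>b. sem X s (Suc k) f (m # xs) \<ge> 2" by blast
  show ?case
  proof (rule exI[of _ "max (Suc n) (max a b)"], intro allI impI)
    fix s assume s: "max (Suc n) (max a b) \<le> s"
    then have sa: "a \<le> s" and sb: "b \<le> s" and sn: "n < s" by auto
    have "mloop (\<lambda>c. sem X s (Suc k) f (c # xs)) s = Suc (Suc n)"
    proof (rule mloop_reach)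
      show "sem X s (Suc k) f (n # xs) = 1" using a sa by simp
      show "\<forall>i<n. sem X s (Suc k) f (i # xs) \<ge> 2" using b sb by blast
      show "n < s" by fact
    qed
    then show "sem X s k (Mn f) xs = Suc n" by simp
  qed
next
  case (zero xs) show ?case by simp
next
  case (succ xs) show ?case by simp
next
  case (proj i xs) show ?case by simp
next
  case (orc xs) show ?case by simp
qed


definition SubR :: recf where "SubR = Prec (Proj 0) (Comp Pred [Proj 1])"

lemma ev_SubR: "eval X SubR [b, a] (a - b)"
proof (induction b)
  case 0 show ?case unfolding SubR_def using eval.prec0[OF eval.proj[of X 0 "[a]"], where g="Comp Pred [Proj 1]"] by simp
next
  case (Suc b)
  have "eval X (Comp Pred [Proj 1]) [b, a - b, a] (a - b - 1)" using ev_pred[OF eval.proj[of X 1 "[b, a - b, a]"]] by simp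
  then show ?case unfolding SubR_def using eval.precS[OF Suc[unfolded SubR_def]] by simp
qed

lemma ev_sub: "eval X e1 xs b \<Longrightarrow> eval X e2 xs a \<Longrightarrow> eval X (Comp SubR [e1, e2]) xs (a - b)"
  by (rule ev_comp[where ys="[b, a]"]) (simp_all add: ev_SubR)

lemma ev_comp2: "eval X g1 xs y1 \<Longrightarrow> eval X g2 xs y2 \<Longrightarrow> eval X f [y1, y2] v \<Longrightarrow> eval X (Comp f [g1, g2]) xs v"
  by (rule ev_comp[where ys="[y1, y2]"]) simp_all

lemma ev_comp3: "eval X g1 xs y1 \<Longrightarrow> eval X g2 xs y2 \<Longrightarrow> eval X g3 xs y3 \<Longrightarrow> eval X f [y1, y2, y3] v \<Longrightarrow> eval X (Comp f [g1, g2, g3]) xs v"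
  by (rule ev_comp[where ys="[y1, y2, y3]"]) simp_all

fun Lh :: "(nat \<Rightarrow> nat \<Rightarrow> nat) \<Rightarrow> nat \<Rightarrow> nat \<Rightarrow> nat \<Rightarrow> nat" where
  "Lh cf t p 0 = 0"
| "Lh cf t p (Suc i) = (let a = Lh cf t p i in if a \<noteq> 0 then a else if p \<le> i \<and> cf t i \<noteq> 0 then Suc i else 0)"

lemma Lh_sound: "Lh cf t p i = Suc x \<Longrightarrow> x < i \<and> p \<le> x \<and> cf t x \<noteq> 0"
  by (induction i) (auto simp: Let_def split: if_splits)

lemma Lh_complete: "x < i \<Longrightarrow> p \<le> x \<Longrightarrow> cf t x \<noteq> 0 \<Longrightarrow> Lh cf t p i \<noteq> 0"
  by (induction i) (auto simp: Let_def less_Suc_eq)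

context
  fixes Y :: "nat set" and Cg :: recf and cf :: "nat \<Rightarrow> nat \<Rightarrow> nat" and B :: "nat set"
  assumes H1: "\<And>t x. eval Y Cg [t, x] (cf t x)"
    and H2: "\<And>t x. cf t x \<noteq> 0 \<Longrightarrow> x \<in> B"
    and H3: "\<And>x. x \<in> B \<Longrightarrow> \<exists>s0. \<forall>s\<ge>s0. cf s x \<noteq> 0"
    and H4: "infinite B"
begin

definition "GL = ifz (Proj 1) (ifz (Comp SubR [Proj 0, Proj 3])
   (ifz (Comp Cg [Proj 2, Proj 0]) Zero (Comp Succ [Proj 0])) Zero) (Proj 1)"
definition "Lrec = Prec Zero GL"

lemma ev_Lrec: "eval Y Lrec [i, t, p] (Lh cf t p i)"
proof (induction i)
  case 0 then show ?case unfolding Lrec_def using eval.prec0[OF eval.zero[of Y "[t, p]"], where g=GL] by simp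
next
  case (Suc i)
  define a where "a = Lh cf t p i"
  have "eval Y GL [i, a, t, p] (Lh cf t p (Suc i))" unfolding GL_def
    apply (rule eval_eq[OF ev_ifz[OF eval.proj[of Y 1 "[i, a, t, p]"]
      ev_ifz[OF ev_sub[OF eval.proj[of Y 0 "[i, a, t, p]"] eval.proj[of Y 3 "[i, a, t, p]"]]
        ev_ifz[OF ev_comp2[OF eval.proj[of Y 2 "[i, a, t, p]"] eval.proj[of Y 0 "[i, a, t, p]"] H1] eval.zero
          ev_comp1[OF eval.proj[of Y 0 "[i, a, t, p]"] eval.succ]] eval.zero] eval.proj[of Y 1 "[i, a, t, p]"]]])
    apply (simp add: a_def[symmetric] Let_def)
    done
  then show ?case unfolding Lrec_def using eval.precS[OF Suc[unfolded Lrec_def, folded a_def]] by simp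
qed

definition "Lc = Comp Lrec [Comp Succ [Proj 0], Proj 0, Proj 1]"

lemma ev_Lc: "eval Y Lc [t, p] (Lh cf t p (Suc t))"
  unfolding Lc_def
  by (rule eval_eq[OF ev_comp3[OF ev_comp1[OF eval.proj[of Y 0 "[t, p]"] eval.succ]
        eval.proj[of Y 0 "[t, p]"] eval.proj[of Y 1 "[t, p]"] ev_Lrec]]) simp

definition "Test = ifz Lc (Comp Succ [Zero]) Zero"

lemma ev_Test: "eval Y Test [t, p] (if Lh cf t p (Suc t) = 0 then 1 else 0)"
  unfolding Test_def by (rule eval_eq[OF ev_ifz[OF ev_Lc ev_comp1[OF eval.zero eval.succ] eval.zero]]) simp

lemma ex_t: "\<exists>t. Lh cf t p (Suc t) \<noteq> 0"
proof -
  obtain x where x: "x \<in> B" "\<not> x \<le> p" using H4 finite_nat_set_iff_bounded_le by blast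
  obtain s0 where s0: "\<forall>s\<ge>s0. cf s x \<noteq> 0" using H3[OF x(1)] by blast
  have "Lh cf (max s0 x) p (Suc (max s0 x)) \<noteq> 0"
    by (rule Lh_complete[of x]) (use x s0 in \<open>auto simp: max.bounded_iff\<close>)
  then show ?thesis by blast
qed

definition "tp p = (LEAST t. Lh cf t p (Suc t) \<noteq> 0)"
definition "Nx p = Lh cf (tp p) p (Suc (tp p)) - 1"

lemma Nx_props: "Nx p \<in> B \<and> p \<le> Nx p"
proof -
  have "Lh cf (tp p) p (Suc (tp p)) \<noteq> 0" unfolding tp_def using ex_t by (rule LeastI_ex)
  then obtain x where x: "Lh cf (tp p) p (Suc (tp p)) = Suc x" by (cases "Lh cf (tp p) p (Suc (tp p))") auto
  then have "Nx p = x" unfolding Nx_def by simp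
  then show ?thesis using Lh_sound[OF x] H2 by auto
qed

definition "Next = Comp Pred [Comp Lc [Mn Test, Proj 0]]"

lemma ev_Next: "eval Y Next [p] (Nx p)"
proof -
  have "eval Y (Mn Test) [p] (tp p)"
  proof (rule eval.mn)
    have "Lh cf (tp p) p (Suc (tp p)) \<noteq> 0" unfolding tp_def using ex_t by (rule LeastI_ex)
    then show "eval Y Test [tp p, p] 0" using ev_Test[of "tp p" p] by simp
    show "\<forall>m<tp p. \<exists>v>0. eval Y Test [m, p] v"
    proof (intro allI impI)
      fix m assume "m < tp p"
      then have "Lh cf m p (Suc m) = 0" unfolding tp_def using not_less_Least by blast
      then show "\<exists>v>0. eval Y Test [m, p] v" using ev_Test[of m p] by auto
    qed
  qed
  then show ?thesis unfolding Next_def Nx_def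
    using ev_pred[OF ev_comp2[OF _ eval.proj[of Y 0 "[p]"] ev_Lc]] by simp
qed

fun e :: "nat \<Rightarrow> nat" where
  "e 0 = Nx 0"
| "e (Suc n) = Nx (Suc (e n))"

definition "E = Prec (Comp Next [Zero]) (Comp Next [Comp Succ [Proj 1]])"

lemma ev_E: "eval Y E [n] (e n)"
proof (induction n)
  case 0 show ?case unfolding E_def
    using eval.prec0[OF ev_comp1[OF eval.zero[of Y "[]"] ev_Next], where g="Comp Next [Comp Succ [Proj 1]]"] by simp
next
  case (Suc n)
  have "eval Y (Comp Next [Comp Succ [Proj 1]]) [n, e n] (e (Suc n))"
    using ev_comp1[OF ev_comp1[OF eval.proj[of Y 1 "[n, e n]"] eval.succ] ev_Next] by simp
  then show ?case using eval.precS[OF Suc[unfolded E_def]] unfolding E_def by simp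
qed

lemma e_mono: "strict_mono e"
  unfolding strict_mono_Suc_iff
proof
  fix n show "e n < e (Suc n)" using Nx_props[of "Suc (e n)"] by simp
qed

lemma e_in: "e n \<in> B"
  by (cases n) (auto simp: Nx_props)

definition "nq q = (LEAST n. q \<le> e n)"

definition "Nq = Mn (Comp SubR [Comp E [Proj 0], Proj 1])"

lemma ex_nq: "\<exists>n. q \<le> e n"
  using strict_mono_imp_increasing[OF e_mono, of q] by blast

lemma ev_Nq: "eval Y Nq [q] (nq q)"
  unfolding Nq_def
proof (rule eval.mn)
  have "q \<le> e (nq q)" unfolding nq_def using ex_nq by (rule LeastI_ex)
  then show "eval Y (Comp SubR [Comp E [Proj 0], Proj 1]) [nq q, q] 0"
    using ev_sub[OF ev_comp1[OF eval.proj[of Y 0 "[nq q, q]"] ev_E] eval.proj[of Y 1 "[nq q, q]"]] by simp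
  show "\<forall>m<nq q. \<exists>v>0. eval Y (Comp SubR [Comp E [Proj 0], Proj 1]) [m, q] v"
  proof (intro allI impI)
    fix m assume "m < nq q"
    then have "\<not> q \<le> e m" unfolding nq_def using not_less_Least by blast
    then show "\<exists>v>0. eval Y (Comp SubR [Comp E [Proj 0], Proj 1]) [m, q] v"
      using ev_sub[OF ev_comp1[OF eval.proj[of Y 0 "[m, q]"] ev_E] eval.proj[of Y 1 "[m, q]"]]
      by (intro exI[of _ "q - e m"]) simp
  qed
qed

definition "Chi = ifz (Comp SubR [Proj 0, Comp E [Nq]]) (Comp Succ [Zero]) Zero"

lemma ev_Chi: "eval Y Chi [q] (if q \<in> range e then 1 else 0)"
proof -
  have le: "q \<le> e (nq q)" unfolding nq_def using ex_nq by (rule LeastI_ex)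
  have iff: "e (nq q) - q = 0 \<longleftrightarrow> q \<in> range e"
  proof
    assume "e (nq q) - q = 0" then have "e (nq q) = q" using le by simp
    then show "q \<in> range e" by (metis rangeI)
  next
    assume "q \<in> range e" then obtain m where m: "q = e m" by blast
    have "nq q \<le> m" unfolding nq_def using m by (intro Least_le) simp
    moreover have "\<not> nq q < m" using le m e_mono by (metis strict_mono_less not_le)
    ultimately show "e (nq q) - q = 0" using m by simp
  qed
  show ?thesis unfolding Chi_def
    by (rule eval_eq[OF ev_ifz[OF ev_sub[OF eval.proj[of Y 0 "[q]"] ev_comp1[OF ev_Nq ev_E]] ev_comp1[OF eval.zero eval.succ] eval.zero]])
      (use iff in simp)
qed

lemma Z_facts: "range e \<subseteq> B" "infinite (range e)"
  using e_in apply blast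
  using e_mono strict_mono_imp_inj_on finite_imageD infinite_UNIV_nat by blast

lemma main_ctx: "\<exists>Ch Z. (\<forall>q. eval Y Ch [q] (if q \<in> Z then 1 else 0)) \<and> Z \<subseteq> B \<and> infinite Z"
  using ev_Chi Z_facts by blast

end


primrec sub :: "recf \<Rightarrow> recf \<Rightarrow> recf" where
  "sub C Zero = Zero"
| "sub C Succ = Succ"
| "sub C (Proj i) = Proj i"
| "sub C Orc = Comp C [Proj 0]"
| "sub C (Comp f gs) = Comp (sub C f) (map (sub C) gs)"
| "sub C (Prec f g) = Prec (sub C f) (sub C g)"
| "sub C (Mn f) = Mn (sub C f)"

lemma sub1:
  assumes C: "\<And>q. eval Y C [q] (if q \<in> Z then 1 else 0)"
  shows "eval Z f xs v \<Longrightarrow> eval Y (sub C f) xs v"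
proof (induction rule: eval.induct)
  case (zero xs) then show ?case by (simp add: eval.zero)
next
  case (succ xs) then show ?case by (simp add: eval.succ)
next
  case (proj i xs) then show ?case by (simp add: eval.proj)
next
  case (orc xs) then show ?case using ev_comp1[OF eval.proj[of Y 0 xs] C] by simp
next
  case (comp ys gs xs f v)
  then show ?case by (auto intro!: eval.comp)
next
  case (prec0 f xs v g) then show ?case by (simp add: eval.prec0)
next
  case (precS f g n xs r v) then show ?case using eval.precS by simp
next
  case (mn f n xs) then show ?case by (auto intro!: eval.mn)
qed

lemma sub_Comp: "sub C f = Comp a b \<Longrightarrow> (f = Orc \<and> a = C \<and> b = [Proj 0]) \<or> (\<exists>f' gs'. f = Comp f' gs' \<and> a = sub C f' \<and> b = map (sub C) gs')"
  by (cases f) auto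

lemma sub2:
  assumes C: "\<And>q. eval Y C [q] (if q \<in> Z then 1 else 0)"
  shows "eval Y h xs v \<Longrightarrow> \<forall>f. h = sub C f \<longrightarrow> eval Z f xs v"
proof (induction rule: eval.induct)
  case (zero xs) show ?case
    by (intro allI impI, case_tac f) (auto intro: eval.zero)
next
  case (succ xs) show ?case
    by (intro allI impI, case_tac f) (auto intro: eval.succ)
next
  case (proj i xs) show ?case
    by (intro allI impI, case_tac f) (auto intro: eval.proj)
next
  case (orc xs) show ?case
    by (intro allI impI, case_tac f) auto
next
  case (comp ys gs xs F v)
  show ?case
  proof (intro allI impI)
    fix f assume h: "Comp F gs = sub C f"
    from sub_Comp[OF h[symmetric]] show "eval Z f xs v"
    proof
      assume o: "f = Orc \<and> F = C \<and> gs = [Proj 0]"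
      then obtain y where ys: "ys = [y]" using comp.hyps(1) by (cases ys) auto
      have "eval Y (gs ! 0) xs (ys ! 0)" using comp.IH(1) o by auto
      then have "eval Y (Proj 0) xs y" using o ys by simp
      then have y: "y = arg xs 0" using eval_det eval.proj by blast
      have "eval Y C [y] v" using comp.hyps(2) o ys by simp
      then have "v = (if arg xs 0 \<in> Z then 1 else 0)" using eval_det C y by blast
      then show ?thesis using o eval.orc by simp
    next
      assume "\<exists>f' gs'. f = Comp f' gs' \<and> F = sub C f' \<and> gs = map (sub C) gs'"
      then obtain f' gs' where o: "f = Comp f' gs'" "F = sub C f'" "gs = map (sub C) gs'" by blast
      show ?thesis unfolding o(1)
      proof (rule eval.comp)
        show "length ys = length gs'" using comp.hyps(1) o by simp
        show "\<forall>i<length gs'. eval Z (gs' ! i) xs (ys ! i)" using comp.IH(1) o by auto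
        show "eval Z f' ys v" using comp.IH(2) o by auto
      qed
    qed
  qed
next
  case (prec0 f xs v g)
  show ?case
  proof (intro allI impI)
    fix f0 assume h: "Prec f g = sub C f0"
    then obtain f' g' where o: "f0 = Prec f' g'" "f = sub C f'" "g = sub C g'" by (cases f0) auto
    show "eval Z f0 (0 # xs) v" unfolding o(1) by (rule eval.prec0) (use prec0.IH o in auto)
  qed
next
  case (precS f g n xs r v)
  show ?case
  proof (intro allI impI)
    fix f0 assume h: "Prec f g = sub C f0"
    then obtain f' g' where o: "f0 = Prec f' g'" "f = sub C f'" "g = sub C g'" by (cases f0) auto
    have a: "eval Z (Prec f' g') (n # xs) r" using precS.IH(1) h o by auto
    have b: "eval Z g' (n # r # xs) v" using precS.IH(2) o by auto
    show "eval Z f0 (Suc n # xs) v" unfolding o(1) by (rule eval.precS[OF a b])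
  qed
next
  case (mn f n xs)
  show ?case
  proof (intro allI impI)
    fix f0 assume h: "Mn f = sub C f0"
    then obtain f' where o: "f0 = Mn f'" "f = sub C f'" by (cases f0) auto
    show "eval Z f0 xs n" unfolding o(1)
    proof (rule eval.mn)
      show "eval Z f' (n # xs) 0" using mn.IH(1) o by auto
      show "\<forall>m<n. \<exists>v>0. eval Z f' (m # xs) v"
      proof (intro allI impI)
        fix m assume "m < n"
        then obtain v where "v > 0" "\<forall>f0. f = sub C f0 \<longrightarrow> eval Z f0 (m # xs) v" using mn.IH(2) by blast
        then show "\<exists>v>0. eval Z f' (m # xs) v" using o by blast
      qed
    qed
  qed
qed

theorem theorem3p1:
  fixes A B C :: "nat set"
  assumes "infinite B" and "infinite C"
    and "\<forall>Y. Y \<subseteq> B \<and> infinite Y \<longrightarrow> ce_in A Y"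
    and "\<forall>Y. Y \<subseteq> C \<and> infinite Y \<longrightarrow> ce_in B Y"
  shows "\<forall>Y. Y \<subseteq> C \<and> infinite Y \<longrightarrow> ce_in A Y"
proof (intro allI impI)
  fix Y assume Y: "Y \<subseteq> C \<and> infinite Y"
  then obtain g where g: "\<forall>x. x \<in> B \<longleftrightarrow> (\<exists>v. eval Y g [x] v)" using assms(4) unfolding ce_in_def by blast
  define cf where "cf = (\<lambda>t x. sem Y t 1 g [x])"
  have H1: "\<And>t x. eval Y (T 1 g) [t, x] (cf t x)" unfolding cf_def using T_correct[of "[_]" 1] by simp
  have H2: "\<And>t x. cf t x \<noteq> 0 \<Longrightarrow> x \<in> B"
  proof -
    fix t x assume "cf t x \<noteq> 0"
    then obtain v where "sem Y t 1 g [x] = Suc v" unfolding cf_def by (cases "sem Y t 1 g [x]") auto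
    then have "eval Y g [x] v" using sem_sound by fastforce
    then show "x \<in> B" using g by blast
  qed
  have H3: "\<And>x. x \<in> B \<Longrightarrow> \<exists>s0. \<forall>s\<ge>s0. cf s x \<noteq> 0"
  proof -
    fix x assume "x \<in> B"
    then obtain v where "eval Y g [x] v" using g by blast
    from sem_complete[OF this, of 1] obtain s0 where "\<forall>s\<ge>s0. sem Y s 1 g [x] = Suc v" by auto
    then show "\<exists>s0. \<forall>s\<ge>s0. cf s x \<noteq> 0" unfolding cf_def by (intro exI[of _ s0]) auto
  qed
  have "\<exists>Ch Z. (\<forall>q. eval Y Ch [q] (if q \<in> Z then 1 else 0)) \<and> Z \<subseteq> B \<and> infinite Z"
    by (rule main_ctx[of Y "T 1 g" cf B]) (use H1 H2 H3 assms(1) in auto)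
  then obtain Ch Z where Ch: "\<forall>q. eval Y Ch [q] (if q \<in> Z then 1 else 0)" and Z: "Z \<subseteq> B" "infinite Z"
    by blast
  obtain fA where fA: "\<forall>x. x \<in> A \<longleftrightarrow> (\<exists>v. eval Z fA [x] v)" using assms(3) Z unfolding ce_in_def by blast
  have "x \<in> A \<longleftrightarrow> (\<exists>v. eval Y (sub Ch fA) [x] v)" for x
  proof
    assume "x \<in> A" then obtain v where "eval Z fA [x] v" using fA by blast
    then show "\<exists>v. eval Y (sub Ch fA) [x] v" using sub1[of Y Ch Z] Ch by blast
  next
    assume "\<exists>v. eval Y (sub Ch fA) [x] v"
    then obtain v where "eval Y (sub Ch fA) [x] v" by blast
    then have "eval Z fA [x] v" using sub2[of Y Ch Z] Ch by blast
    then show "x \<in> A" using fA by blast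
  qed
  then show "ce_in A Y" unfolding ce_in_def by blast
qed


end
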